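(* Let $H=(V,E)$ be a hypergraph with $E\ne\emptyset$, without empty edges, such that $|e|$ is even for every $e\in E$, and let $H^T=(E,V^T)$ be its dual. Let $E'\subseteq E$. Then $(V,E')$ is a $2$-factor of $H$ if and only if $H^T$ has an Euler family whose anchor set is exactly $E'$ and which traverses every vertex $e\in E'$ of $H^T$ exactly $|e|/2$ times. Likewise, $(V,E')$ is a connected $2$-factor of $H$ if and only if $H^T$ has an Euler tour whose anchor set is exactly $E'$ and which traverses every $e\in E'$ exactly $|e|/2$ times.
   Context: A hypergraph $H=(V,E)$ consists of a finite nonempty vertex set $V$, a finite edge set $E$ disjoint from $V$, and an incidence function assigning to each edge $e\in E$ a subset of $V$ (also denoted $e$); distinct edges may have the same vertex set. The degree of a vertex is the number of edges containing it. A $2$-factor of $H$ is a hypersubgraph $(V,E')$ with $E'\subseteq E$ in which every vertex of $V$ has degree exactly $2$; it is connected if any two distinct vertices are joined by a walk in $(V,E')$. The dual of $H$ is the hypergraph $H^T=(E,V^T)$ with vertex set $E$ and edge set $V^T=\{v^T: v\in V\}$, where $v^T=\{e\in E: v\in e\}$. A walk is a sequence $W=v_0e_1v_1e_2\cdots e_kv_k$ of vertices $v_i$ and edges $e_i$ such that for each $i$, $v_{i-1}\ne v_i$ and $v_{i-1},v_i\in e_i$; the $v_i$ are its anchors. $W$ is closed if $k\ge 2$ and $v_0=v_k$; it is a strict trail if $e_1,\dots,e_k$ are pairwise distinct. For a closed walk, the number of times it traverses a vertex $x$ is the number of indices $i\in\{1,\dots,k\}$ with $v_i=x$ (so the common endpoint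 counts once). An Euler tour is a closed strict trail traversing every edge; an Euler family is a family of closed strict trails such that every edge lies in exactly one trail and no two trails have a common anchor. The anchor set of an Euler family (or tour) is the set of all anchors of its trails, and the number of times the family traverses a vertex is the sum over its trails. *)

theory Defs
  imports Main
begin

text \<open>A hypergraph is given by a vertex set V (of type 'v), an edge set E (of type 'e,
  so V and E are automatically disjoint) and an incidence function inc assigning to
  each edge a set of vertices. Distinct edges may have the same vertex set.\<close>

definition hypergraph :: "'v set \<Rightarrow> 'e set \<Rightarrow> ('e \<Rightarrow> 'v set) \<Rightarrow> bool" where
  "hypergraph V E inc \<longleftrightarrow> finite V \<and> V \<noteq> {} \<and> finite E \<and> (\<forall>e\<in>E. inc e \<subseteq> V)"

text \<open>Dual incidence: the edge v^T of the dual is the set of edges of H containing v.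
  The dual of (V,E,inc) is (E,V,dual_inc E inc).\<close>

definition dual_inc :: "'e set \<Rightarrow> ('e \<Rightarrow> 'v set) \<Rightarrow> 'v \<Rightarrow> 'e set" where
  "dual_inc E inc v = {e\<in>E. v \<in> inc e}"

definition degree :: "'e set \<Rightarrow> ('e \<Rightarrow> 'v set) \<Rightarrow> 'v \<Rightarrow> nat" where
  "degree E inc v = card {e\<in>E. v \<in> inc e}"

text \<open>A walk v0 e1 v1 ... ek vk is represented by the anchor list vs = [v0,...,vk]
  and the edge list es = [e1,...,ek].\<close>

definition walk :: "'v set \<Rightarrow> 'e set \<Rightarrow> ('e \<Rightarrow> 'v set) \<Rightarrow> 'v list \<Rightarrow> 'e list \<Rightarrow> bool" where
  "walk V E inc vs es \<longleftrightarrow> length vs = Suc (length es) \<and> set vs \<subseteq> V \<and> set es \<subseteq> E \<and>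
     (\<forall>i<length es. vs ! i \<noteq> vs ! Suc i \<and> vs ! i \<in> inc (es ! i) \<and> vs ! Suc i \<in> inc (es ! i))"

definition closed_walk :: "'v set \<Rightarrow> 'e set \<Rightarrow> ('e \<Rightarrow> 'v set) \<Rightarrow> 'v list \<Rightarrow> 'e list \<Rightarrow> bool" where
  "closed_walk V E inc vs es \<longleftrightarrow> walk V E inc vs es \<and> length es \<ge> 2 \<and> vs ! 0 = vs ! length es"

definition closed_strict_trail :: "'v set \<Rightarrow> 'e set \<Rightarrow> ('e \<Rightarrow> 'v set) \<Rightarrow> 'v list \<Rightarrow> 'e list \<Rightarrow> bool" where
  "closed_strict_trail V E inc vs es \<longleftrightarrow> closed_walk V E inc vs es \<and> distinct es"

definition traversals :: "'v list \<Rightarrow> 'e list \<Rightarrow> 'v \<Rightarrow> nat" where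
  "traversals vs es x = card {i\<in>{1..length es}. vs ! i = x}"

definition euler_tour :: "'v set \<Rightarrow> 'e set \<Rightarrow> ('e \<Rightarrow> 'v set) \<Rightarrow> 'v list \<Rightarrow> 'e list \<Rightarrow> bool" where
  "euler_tour V E inc vs es \<longleftrightarrow> closed_strict_trail V E inc vs es \<and> set es = E"

definition euler_family :: "'v set \<Rightarrow> 'e set \<Rightarrow> ('e \<Rightarrow> 'v set) \<Rightarrow> ('v list \<times> 'e list) set \<Rightarrow> bool" where
  "euler_family V E inc F \<longleftrightarrow>
     (\<forall>T\<in>F. closed_strict_trail V E inc (fst T) (snd T)) \<and>
     (\<forall>e\<in>E. \<exists>!T. T \<in> F \<and> e \<in> set (snd T)) \<and>
     (\<forall>T\<in>F. \<forall>T'\<in>F. T \<noteq> T' \<longrightarrow> set (fst T) \<inter> set (fst T') = {})"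

definition family_anchors :: "('v list \<times> 'e list) set \<Rightarrow> 'v set" where
  "family_anchors F = (\<Union>T\<in>F. set (fst T))"

definition family_traversals :: "('v list \<times> 'e list) set \<Rightarrow> 'v \<Rightarrow> nat" where
  "family_traversals F x = (\<Sum>T\<in>F. traversals (fst T) (snd T) x)"

definition two_factor :: "'v set \<Rightarrow> 'e set \<Rightarrow> ('e \<Rightarrow> 'v set) \<Rightarrow> 'e set \<Rightarrow> bool" where
  "two_factor V E inc E' \<longleftrightarrow> E' \<subseteq> E \<and> (\<forall>v\<in>V. degree E' inc v = 2)"

definition connected_hg :: "'v set \<Rightarrow> 'e set \<Rightarrow> ('e \<Rightarrow> 'v set) \<Rightarrow> bool" where
  "connected_hg V E inc \<longleftrightarrow> (\<forall>u\<in>V. \<forall>w\<in>V. u \<noteq> w \<longrightarrow>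
     (\<exists>vs es. walk V E inc vs es \<and> hd vs = u \<and> last vs = w))"

definition connected_two_factor :: "'v set \<Rightarrow> 'e set \<Rightarrow> ('e \<Rightarrow> 'v set) \<Rightarrow> 'e set \<Rightarrow> bool" where
  "connected_two_factor V E inc E' \<longleftrightarrow> two_factor V E inc E' \<and> connected_hg V E' inc"

end

theory Submission
  imports Defs
begin


lemma walk_nthD:
  assumes "walk V E inc vs es" "i < length es"
  shows "vs!i \<noteq> vs!Suc i" "vs!i \<in> inc (es!i)" "vs!Suc i \<in> inc (es!i)" "es!i \<in> E"
        "vs!i \<in> V" "vs!Suc i \<in> V"
  using assms unfolding walk_def by (auto intro!: nth_mem subsetD[of "set vs" V] subsetD[of "set es" E])

lemma walk_two: "walk V E inc [u,w] [v] \<longleftrightarrow> u\<in>V \<and> w\<in>V \<and> v\<in>E \<and> u\<noteq>w \<and> u\<in>inc v \<and> w\<in>inc v"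
  by (auto simp: walk_def)

lemma walk_take:
  assumes "walk V E inc vs es" "i \<le> length es"
  shows "walk V E inc (take (Suc i) vs) (take i es)"
  using assms unfolding walk_def
  by (auto dest: in_set_takeD simp: min_def)

lemma walk_drop:
  assumes "walk V E inc vs es" "i \<le> length es"
  shows "walk V E inc (drop i vs) (drop i es)"
  using assms unfolding walk_def
  by (auto dest: in_set_dropD)

lemma walk_join:
  assumes w1: "walk V E inc vs1 es1" and w2: "walk V E inc vs2 es2" and l: "last vs1 = hd vs2"
  shows "walk V E inc (vs1 @ tl vs2) (es1 @ es2)"
proof -
  let ?n = "length es1"
  have l1: "length vs1 = Suc ?n" and l2: "length vs2 = Suc (length es2)"
    using assms unfolding walk_def by auto
  have key: "(vs1 @ tl vs2) ! (?n + m) = vs2 ! m" if "m < length vs2" for m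
  proof (cases m)
    case 0
    have "vs1 \<noteq> []" using l1 by auto
    then have "vs1 ! ?n = last vs1" using l1 by (simp add: last_conv_nth)
    also have "\<dots> = vs2 ! 0" using l l2 by (cases vs2) auto
    finally show ?thesis using 0 l1 by (simp add: nth_append)
  next
    case (Suc m')
    then show ?thesis using l1 that by (simp add: nth_append nth_tl)
  qed
  have key1: "(vs1 @ tl vs2) ! i = vs1 ! i" if "i < length vs1" for i
    using that by (simp add: nth_append)
  show ?thesis
    unfolding walk_def
  proof (intro conjI)
    show "length (vs1 @ tl vs2) = Suc (length (es1 @ es2))" using l1 l2 by simp
    show "set (vs1 @ tl vs2) \<subseteq> V" using w1 w2 unfolding walk_def by (auto dest: list.set_sel(2)[rotated])
    show "set (es1 @ es2) \<subseteq> E" using w1 w2 unfolding walk_def by auto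
    show "\<forall>i<length (es1 @ es2). (vs1 @ tl vs2) ! i \<noteq> (vs1 @ tl vs2) ! Suc i \<and>
          (vs1 @ tl vs2) ! i \<in> inc ((es1 @ es2) ! i) \<and> (vs1 @ tl vs2) ! Suc i \<in> inc ((es1 @ es2) ! i)"
    proof (intro allI impI)
    fix i assume i: "i < length (es1 @ es2)"
    show "(vs1 @ tl vs2) ! i \<noteq> (vs1 @ tl vs2) ! Suc i \<and>
          (vs1 @ tl vs2) ! i \<in> inc ((es1 @ es2) ! i) \<and> (vs1 @ tl vs2) ! Suc i \<in> inc ((es1 @ es2) ! i)"
    proof (cases "i < ?n")
      case True
      then show ?thesis using key1[of i] key1[of "Suc i"] l1 walk_nthD[OF w1 True]
        by (simp add: nth_append)
    next
      case False
      then obtain m where m: "i = ?n + m" "m < length es2" using i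
        by (metis add_diff_inverse_nat length_append nat_add_left_cancel_less)
      have "Suc i = ?n + Suc m" using m by simp
      then show ?thesis using m key[of m] key[of "Suc m"] l2 walk_nthD[OF w2 m(2)]
        by (simp add: nth_append)
    qed
  qed
  qed
qed

lemma walk_rev:
  assumes w: "walk V E inc vs es"
  shows "walk V E inc (rev vs) (rev es)"
proof -
  let ?k = "length es"
  have l: "length vs = Suc ?k" using w unfolding walk_def by auto
  show ?thesis unfolding walk_def
  proof (intro conjI)
    show "length (rev vs) = Suc (length (rev es))" using l by simp
    show "set (rev vs) \<subseteq> V" "set (rev es) \<subseteq> E" using w unfolding walk_def by auto
    show "\<forall>j<length (rev es). rev vs ! j \<noteq> rev vs ! Suc j \<and> rev vs ! j \<in> inc (rev es ! j) \<and> rev vs ! Suc j \<in> inc (rev es ! j)"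
    proof (intro allI impI)
    fix j assume j: "j < length (rev es)"
    define i where "i = ?k - Suc j"
    have i: "i < ?k" using j i_def by simp
    have a: "rev vs ! j = vs ! Suc i" using j l i_def by (simp add: rev_nth Suc_diff_Suc)
    have b: "rev vs ! Suc j = vs ! i" using j l i_def by (simp add: rev_nth)
    have c: "rev es ! j = es ! i" using j i_def by (simp add: rev_nth)
    show "rev vs ! j \<noteq> rev vs ! Suc j \<and> rev vs ! j \<in> inc (rev es ! j) \<and> rev vs ! Suc j \<in> inc (rev es ! j)"
      using a b c walk_nthD[OF w i] by metis
  qed
  qed
qed

lemma card_lt_Suc: "card {i. i < Suc k \<and> P i} = card {i. i < k \<and> P i} + (if P k then 1 else 0)"
proof (cases "P k")
  case True
  have "{i. i < Suc k \<and> P i} = insert k {i. i < k \<and> P i}" using True by (auto simp: less_Suc_eq)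
  then show ?thesis using True by simp
next
  case False
  have "{i. i < Suc k \<and> P i} = {i. i < k \<and> P i}" using False by (auto simp: less_Suc_eq)
  then show ?thesis using False by simp
qed

lemma card_lt_Suc_shift: "card {i. i < Suc k \<and> P i} = card {i. i < k \<and> P (Suc i)} + (if P 0 then 1 else 0)"
proof -
  have fin: "finite (Suc ` {i. i < k \<and> P (Suc i)})" by simp
  have c: "card (Suc ` {i. i < k \<and> P (Suc i)}) = card {i. i < k \<and> P (Suc i)}"
    by (simp add: card_image)
  show ?thesis
  proof (cases "P 0")
    case True
    have "{i. i < Suc k \<and> P i} = insert 0 (Suc ` {i. i < k \<and> P (Suc i)})"
      using True by (auto simp: image_iff elim: lessE) (metis less_Suc_eq_0_disj)
    then show ?thesis using True fin c by simp
  next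
    case False
    have "{i. i < Suc k \<and> P i} = Suc ` {i. i < k \<and> P (Suc i)}"
      using False by (auto simp: image_iff) (metis less_Suc_eq_0_disj)
    then show ?thesis using False c by simp
  qed
qed

definition inc_edges :: "'a list \<Rightarrow> 'b list \<Rightarrow> 'a \<Rightarrow> 'b set" where
  "inc_edges vs es x = (\<lambda>j. es!j) ` {j. j < length es \<and> (vs!j = x \<or> vs!Suc j = x)}"

lemma traversals_alt: "traversals vs es x = card {j. j < length es \<and> vs ! Suc j = x}"
proof -
  have "{i\<in>{1..length es}. vs ! i = x} = Suc ` {j. j < length es \<and> vs ! Suc j = x}"
    by (auto simp: image_iff) (metis Suc_le_eq Suc_pred')
  then show ?thesis unfolding traversals_def by (simp add: card_image)
qed

lemma walk_count:
  assumes w: "walk V E inc vs es" and d: "distinct es"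
  shows "card (inc_edges vs es x) + (if vs ! length es = x then 1 else 0)
       = 2 * traversals vs es x + (if vs ! 0 = x then 1 else 0)"
proof -
  let ?k = "length es"
  let ?J = "{j. j < ?k \<and> (vs!j = x \<or> vs!Suc j = x)}"
  let ?A = "{j. j < ?k \<and> vs!j = x}"
  let ?B = "{j. j < ?k \<and> vs!Suc j = x}"
  have "card (inc_edges vs es x) = card ?J"
    unfolding inc_edges_def by (rule card_image) (rule inj_on_nth[OF d], auto)
  also have "?J = ?A \<union> ?B" by auto
  also have "card (?A \<union> ?B) = card ?A + card ?B"
    by (rule card_Un_disjoint) (use walk_nthD(1)[OF w] in fastforce)+
  finally have 1: "card (inc_edges vs es x) = card ?A + card ?B" .
  have 2: "card ?A + (if vs ! ?k = x then 1 else 0) = card ?B + (if vs ! 0 = x then 1 else 0)"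
    using card_lt_Suc[of ?k "\<lambda>i. vs!i = x"] card_lt_Suc_shift[of ?k "\<lambda>i. vs!i = x"] by simp
  show ?thesis using 1 2 traversals_alt[of vs es x] by simp
qed




lemma tl_subD: "x \<in> set (tl xs) \<Longrightarrow> x \<in> set xs"
  by (cases xs) auto

locale tf =
  fixes V :: "'v set" and E :: "'e set" and inc :: "'e \<Rightarrow> 'v set" and E' :: "'e set"
  assumes finV: "finite V" and finE: "finite E" and incV: "\<forall>e\<in>E. inc e \<subseteq> V"
    and E'E: "E' \<subseteq> E" and deg2: "\<forall>v\<in>V. card {e\<in>E'. v \<in> inc e} = 2"
begin

definition trailS where
  "trailS S vs es \<longleftrightarrow> walk E V (dual_inc E inc) vs es \<and> distinct es \<and> set es \<subseteq> S \<and> set vs \<subseteq> E'"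

lemma two_ends:
  assumes "v \<in> V" "a \<in> E'" "b \<in> E'" "a \<noteq> b" "v \<in> inc a" "v \<in> inc b" "e \<in> E'" "v \<in> inc e"
  shows "e = a \<or> e = b"
proof (rule ccontr)
  assume "\<not> (e = a \<or> e = b)"
  then have "card {a,b,e} = 3" using assms by auto
  moreover have "{a,b,e} \<subseteq> {e\<in>E'. v \<in> inc e}" using assms by auto
  moreover have "finite {e\<in>E'. v \<in> inc e}" using finE E'E by (auto intro: finite_subset)
  ultimately have "3 \<le> card {e\<in>E'. v \<in> inc e}" by (metis card_mono)
  then show False using deg2 assms(1) by auto
qed

lemma other_end:
  assumes "v \<in> V" "e \<in> E'" "v \<in> inc e"
  shows "\<exists>u\<in>E'. u \<noteq> e \<and> v \<in> inc u"
proof -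
  obtain x y where xy: "{e\<in>E'. v \<in> inc e} = {x,y}" "x \<noteq> y"
    using deg2 assms(1) card_2_iff by metis
  have "e \<in> {x,y}" using xy assms by blast
  then show ?thesis using xy by (metis (mono_tags, lifting) insertCI mem_Collect_eq)
qed

lemma walkD_dual:
  assumes "walk E V (dual_inc E inc) vs es" "j < length es"
  shows "es!j \<in> inc (vs!j)" "es!j \<in> inc (vs!Suc j)" "vs!j \<noteq> vs!Suc j" "es!j \<in> V"
        "vs!j \<in> E" "vs!Suc j \<in> E"
  using walk_nthD[OF assms] by (auto simp: dual_inc_def)

lemma walk_dual_two:
  "walk E V (dual_inc E inc) [u,w] [v] \<longleftrightarrow> u\<in>E \<and> w\<in>E \<and> v\<in>V \<and> u\<noteq>w \<and> v\<in>inc u \<and> v\<in>inc w"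
  by (auto simp: walk_two dual_inc_def)

lemma trail_end:
  assumes "trailS S vs es" "j < length es" "e \<in> E'" "es!j \<in> inc e"
  shows "e = vs!j \<or> e = vs!Suc j"
proof -
  have w: "walk E V (dual_inc E inc) vs es" using assms(1) trailS_def by auto
  have l: "length vs = Suc (length es)" using w unfolding walk_def by auto
  have "vs!j \<in> E'" "vs!Suc j \<in> E'" using assms(1,2) l unfolding trailS_def
    by (auto intro!: subsetD[of "set vs" E'] nth_mem)
  then show ?thesis using two_ends[of "es!j" "vs!j" "vs!Suc j" e] walkD_dual[OF w assms(2)] assms
    by blast
qed

lemma inc_edges_eq:
  assumes "trailS S vs es" "e \<in> E'"
  shows "inc e \<inter> set es = inc_edges vs es e"
proof
  have w: "walk E V (dual_inc E inc) vs es" using assms(1) trailS_def by auto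
  show "inc e \<inter> set es \<subseteq> inc_edges vs es e"
  proof
    fix v assume v: "v \<in> inc e \<inter> set es"
    then obtain j where j: "j < length es" "v = es!j" by (auto simp: in_set_conv_nth)
    then show "v \<in> inc_edges vs es e" using trail_end[OF assms(1) j(1) assms(2)] v
      unfolding inc_edges_def by auto
  qed
  show "inc_edges vs es e \<subseteq> inc e \<inter> set es"
    unfolding inc_edges_def using walkD_dual(1,2)[OF w] by auto
qed

lemma trailS_len: "trailS S vs es \<Longrightarrow> S \<subseteq> V \<Longrightarrow> length es \<le> card S"
  unfolding trailS_def using finV
  by (metis card_mono distinct_card finite_subset)

lemma maxtrail:
  assumes "S \<subseteq> V" "S \<noteq> {}"
  shows "\<exists>vs es. trailS S vs es \<and> 1 \<le> length es \<and> (\<forall>vs' es'. trailS S vs' es' \<longrightarrow> length es' \<le> length es)"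
proof -
  obtain v where v: "v \<in> S" using assms by auto
  have vV: "v \<in> V" using v assms by auto
  obtain a b where ab: "a \<in> E'" "b \<in> E'" "a \<noteq> b" "v \<in> inc a" "v \<in> inc b"
    using deg2 vV card_2_iff by (metis (no_types, lifting) insertCI mem_Collect_eq)
  have "trailS S [a,b] [v]" unfolding trailS_def walk_dual_two using ab v vV E'E by auto
  then have P1: "\<exists>vs es. trailS S vs es \<and> length es = 1" by fastforce
  have "\<exists>x. (\<exists>vs es. trailS S vs es \<and> length es = x) \<and>
        (\<forall>y. (\<exists>vs es. trailS S vs es \<and> length es = y) \<longrightarrow> y \<le> x)"
    by (rule Nat.ex_has_greatest_nat[where P="\<lambda>x. \<exists>vs es. trailS S vs es \<and> length es = x" and k=1 and b="card S", OF P1]) (use trailS_len assms(1) in blast)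
  then obtain x vs es where "trailS S vs es" "length es = x"
     "\<forall>y. (\<exists>vs es. trailS S vs es \<and> length es = y) \<longrightarrow> y \<le> x" by blast
  then show ?thesis using P1 by (metis)
qed

lemma closedA:
  assumes S: "S \<subseteq> V" and ev: "\<forall>e\<in>E'. even (card (inc e \<inter> S))"
    and t: "trailS S vs es" and mx: "\<forall>vs' es'. trailS S vs' es' \<longrightarrow> length es' \<le> length es"
  shows "vs!0 = vs!length es"
proof (rule ccontr)
  assume ne: "vs!0 \<noteq> vs!length es"
  let ?k = "length es" let ?w = "vs!?k"
  have w: "walk E V (dual_inc E inc) vs es" and d: "distinct es" and sS: "set es \<subseteq> S"
    and sE: "set vs \<subseteq> E'" using t trailS_def by auto
  have l: "length vs = Suc ?k" using w unfolding walk_def by auto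
  have wE: "?w \<in> E'" using sE l by (auto intro!: subsetD[of "set vs" E'] nth_mem)
  have cnt: "card (inc_edges vs es ?w) + 1 = 2 * traversals vs es ?w"
    using walk_count[OF w d, of ?w] ne by simp
  have sub: "inc_edges vs es ?w \<subseteq> inc ?w \<inter> S" using inc_edges_eq[OF t wE] sS by auto
  have fin: "finite (inc ?w \<inter> S)" using finV S by (auto intro: finite_subset)
  have "inc_edges vs es ?w \<noteq> inc ?w \<inter> S"
  proof
    assume "inc_edges vs es ?w = inc ?w \<inter> S"
    then have "even (card (inc_edges vs es ?w))" using ev wE by simp
    then show False using cnt by presburger
  qed
  then obtain v where v: "v \<in> inc ?w" "v \<in> S" "v \<notin> inc_edges vs es ?w" using sub by blast
  have vn: "v \<notin> set es" using v inc_edges_eq[OF t wE] by blast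
  have vV: "v \<in> V" using v S by auto
  obtain u where u: "u \<in> E'" "u \<noteq> ?w" "v \<in> inc u" using other_end[OF vV wE v(1)] by blast
  have w2: "walk E V (dual_inc E inc) [?w,u] [v]"
    unfolding walk_dual_two using u vV v wE E'E by auto
  have lst: "last vs = ?w" using l by (metis last_conv_nth diff_Suc_1 list.size(3) nat.distinct(1))
  have "walk E V (dual_inc E inc) (vs @ tl [?w,u]) (es @ [v])"
    by (rule walk_join[OF w w2]) (simp add: lst)
  then have "trailS S (vs @ [u]) (es @ [v])"
    unfolding trailS_def using d vn sS v(2) sE u(1) by auto
  then show False using mx by fastforce
qed

lemma noextB:
  assumes t: "trailS S vs es" and mx: "\<forall>vs' es'. trailS S vs' es' \<longrightarrow> length es' \<le> length es"
    and cl: "vs!0 = vs!length es" and S: "S \<subseteq> V" and k1: "1 \<le> length es"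
    and a: "a \<in> set vs" and v: "v \<in> S" "v \<notin> set es" "v \<in> inc a"
  shows False
proof -
  let ?k = "length es"
  have w: "walk E V (dual_inc E inc) vs es" and d: "distinct es" and sS: "set es \<subseteq> S"
    and sE: "set vs \<subseteq> E'" using t trailS_def by auto
  have l: "length vs = Suc ?k" using w unfolding walk_def by auto
  obtain i where i: "i < ?k" "vs!i = a"
  proof -
    obtain j where j: "j < Suc ?k" "vs!j = a" using a l by (auto simp: in_set_conv_nth)
    show ?thesis
    proof (cases "j < ?k")
      case True then show ?thesis using that j by blast
    next
      case False
      then have "j = ?k" using j by simp
      then have "vs!0 = a" using cl j by simp
      have "?k \<noteq> 0" using k1 by linarith
      then show ?thesis using that \<open>vs!0 = a\<close> by blast
    qed
  qed
  define vs' where "vs' = drop i vs @ tl (take (Suc i) vs)"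
  define es' where "es' = drop i es @ take i es"
  have w1: "walk E V (dual_inc E inc) (drop i vs) (drop i es)" using walk_drop[OF w] i by simp
  have w2: "walk E V (dual_inc E inc) (take (Suc i) vs) (take i es)" using walk_take[OF w] i by simp
  have lst: "last (drop i vs) = hd (take (Suc i) vs)"
  proof -
    have "last (drop i vs) = last vs" using i l by simp
    also have "\<dots> = vs ! ?k" using l by (metis last_conv_nth diff_Suc_1 list.size(3) nat.distinct(1))
    also have "\<dots> = vs ! 0" using cl by simp
    also have "\<dots> = hd (take (Suc i) vs)" using l by (cases vs) auto
    finally show ?thesis .
  qed
  have w': "walk E V (dual_inc E inc) vs' es'" unfolding vs'_def es'_def by (rule walk_join[OF w1 w2 lst])
  have hd': "hd vs' = a" unfolding vs'_def using i l by (simp add: hd_drop_conv_nth)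
  have setes': "set es' = set es" unfolding es'_def
    by (metis append_take_drop_id set_append sup_commute)
  have dis': "distinct es'" unfolding es'_def using d
    by (metis append_take_drop_id distinct_append inf_sup_aci(1))
  have setvs': "set vs' \<subseteq> set vs" unfolding vs'_def
    by (auto dest: in_set_dropD tl_subD in_set_takeD)
  have vV: "v \<in> V" using v S by auto
  have aE: "a \<in> E'" using a sE by auto
  obtain u where u: "u \<in> E'" "u \<noteq> a" "v \<in> inc u" using other_end[OF vV aE v(3)] by blast
  have w3: "walk E V (dual_inc E inc) [u,a] [v]"
    unfolding walk_dual_two using u vV v aE E'E by auto
  have "walk E V (dual_inc E inc) ([u,a] @ tl vs') ([v] @ es')"
    by (rule walk_join[OF w3 w']) (simp add: hd')
  moreover have "set ([u,a] @ tl vs') \<subseteq> E'" using u aE setvs' sE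
    by (auto dest: tl_subD)
  ultimately have "trailS S ([u,a] @ tl vs') ([v] @ es')"
    unfolding trailS_def using dis' setes' v sS by auto
  moreover have "length ([v] @ es') = Suc ?k" unfolding es'_def using i by simp
  ultimately show False using mx by fastforce
qed

lemma famS:
  assumes "S \<subseteq> V" "\<forall>e\<in>E'. even (card (inc e \<inter> S))"
  shows "\<exists>F. finite F \<and>
     (\<forall>T\<in>F. closed_strict_trail E V (dual_inc E inc) (fst T) (snd T) \<and> set (fst T) \<subseteq> E' \<and> set (snd T) \<subseteq> S) \<and>
     (\<forall>v\<in>S. \<exists>!T. T\<in>F \<and> v \<in> set (snd T)) \<and>
     (\<forall>T\<in>F. \<forall>T'\<in>F. T \<noteq> T' \<longrightarrow> set (fst T) \<inter> set (fst T') = {}) \<and>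
     (\<forall>e\<in>E'. family_traversals F e = card (inc e \<inter> S) div 2) \<and>
     family_anchors F = {e\<in>E'. inc e \<inter> S \<noteq> {}}"
  using assms
proof (induction "card S" arbitrary: S rule: less_induct)
  case less
  note S = less.prems(1) and ev = less.prems(2)
  have finS: "finite S" using S finV by (auto intro: finite_subset)
  show ?case
  proof (cases "S = {}")
    case True
    then show ?thesis
      by (intro exI[of _ "{}"]) (simp add: family_traversals_def family_anchors_def)
  next
    case False
    obtain vs es where t: "trailS S vs es" and k1: "1 \<le> length es"
      and mx: "\<forall>vs' es'. trailS S vs' es' \<longrightarrow> length es' \<le> length es"
      using maxtrail[OF S False] by blast
    have cl: "vs!0 = vs!length es" using closedA[OF S ev t mx] .
    have w: "walk E V (dual_inc E inc) vs es" and d: "distinct es" and sS: "set es \<subseteq> S"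
      and sE: "set vs \<subseteq> E'" using t trailS_def by auto
    have k2: "2 \<le> length es"
    proof (rule ccontr)
      assume "\<not> 2 \<le> length es"
      then have "length es = 1" using k1 by simp
      then show False using walkD_dual(3)[OF w, of 0] cl by simp
    qed
    have cst: "closed_strict_trail E V (dual_inc E inc) vs es"
      unfolding closed_strict_trail_def closed_walk_def using w k2 cl d by simp
    have trv: "card (inc e \<inter> set es) = 2 * traversals vs es e" if "e \<in> E'" for e
      using walk_count[OF w d, of e] cl inc_edges_eq[OF t that] by simp
    define S' where "S' = S - set es"
    have ne: "set es \<noteq> {}" using k1 by auto
    have lt: "card S' < card S" unfolding S'_def using finS sS ne
      by (intro psubset_card_mono) (auto, metis Diff_iff all_not_in_conv set_empty subsetD)
    have cardsplit: "card (inc e \<inter> S) = card (inc e \<inter> set es) + card (inc e \<inter> S')" for e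
    proof -
      have "inc e \<inter> S = (inc e \<inter> set es) \<union> (inc e \<inter> S')" unfolding S'_def using sS by auto
      moreover have "finite (inc e \<inter> S)" using finS by simp
      ultimately show ?thesis unfolding S'_def
        by (metis Diff_disjoint Int_Diff card_Un_disjoint finite_Un inf_commute)
    qed
    have S'V: "S' \<subseteq> V" using S S'_def by auto
    have ev': "\<forall>e\<in>E'. even (card (inc e \<inter> S'))"
    proof
      fix e assume e: "e \<in> E'"
      have "even (card (inc e \<inter> S))" using ev e by blast
      then show "even (card (inc e \<inter> S'))" using cardsplit[of e] trv[OF e] by simp
    qed
    obtain F' where F': "finite F'"
      "\<forall>T\<in>F'. closed_strict_trail E V (dual_inc E inc) (fst T) (snd T) \<and> set (fst T) \<subseteq> E' \<and> set (snd T) \<subseteq> S'"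
      "\<forall>v\<in>S'. \<exists>!T. T\<in>F' \<and> v \<in> set (snd T)"
      "\<forall>T\<in>F'. \<forall>T'\<in>F'. T \<noteq> T' \<longrightarrow> set (fst T) \<inter> set (fst T') = {}"
      "\<forall>e\<in>E'. family_traversals F' e = card (inc e \<inter> S') div 2"
      "family_anchors F' = {e\<in>E'. inc e \<inter> S' \<noteq> {}}"
      using less.hyps[OF lt S'V ev'] by blast
    have notin: "(vs,es) \<notin> F'"
    proof
      assume "(vs,es) \<in> F'"
      then have "set es \<subseteq> S'" using F'(2) by fastforce
      then show False using ne unfolding S'_def by (metis Diff_iff ex_in_conv subsetD)
    qed
    have anc: "set vs = {e\<in>E'. inc e \<inter> set es \<noteq> {}}"
    proof
      show "set vs \<subseteq> {e\<in>E'. inc e \<inter> set es \<noteq> {}}"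
      proof
        fix e assume e: "e \<in> set vs"
        then obtain j where j: "j < Suc (length es)" "vs!j = e"
          using w unfolding walk_def by (auto simp: in_set_conv_nth)
        show "e \<in> {e\<in>E'. inc e \<inter> set es \<noteq> {}}"
        proof (cases "j < length es")
          case True
          then show ?thesis using walkD_dual(1)[OF w True] j e sE by (auto intro: nth_mem)
        next
          case False
          then have "j = length es" "0 < length es" using j k1 by auto
          then show ?thesis using walkD_dual(2)[OF w, of "length es - 1"] j e sE
            by (auto intro!: nth_mem)
        qed
      qed
      show "{e\<in>E'. inc e \<inter> set es \<noteq> {}} \<subseteq> set vs"
      proof
        fix e assume e: "e \<in> {e\<in>E'. inc e \<inter> set es \<noteq> {}}"
        then obtain j where j: "j < length es" "es!j \<in> inc e" "e \<in> E'" by (auto simp: in_set_conv_nth)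
        have l: "length vs = Suc (length es)" using w unfolding walk_def by auto
        show "e \<in> set vs" using trail_end[OF t j(1) j(3) j(2)] j l by (auto intro: nth_mem)
      qed
    qed
    show ?thesis
    proof (intro exI[of _ "insert (vs,es) F'"] conjI)
      show "finite (insert (vs, es) F')" using F'(1) by simp
      show "\<forall>T\<in>insert (vs, es) F'. closed_strict_trail E V (dual_inc E inc) (fst T) (snd T) \<and> set (fst T) \<subseteq> E' \<and> set (snd T) \<subseteq> S"
        using F'(2) cst sE sS S'_def by auto
      show "\<forall>v\<in>S. \<exists>!T. T \<in> insert (vs, es) F' \<and> v \<in> set (snd T)"
      proof
        fix v assume v: "v \<in> S"
        show "\<exists>!T. T \<in> insert (vs, es) F' \<and> v \<in> set (snd T)"
        proof (cases "v \<in> set es")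
          case True
          then show ?thesis using F'(2) S'_def by (intro ex1I[of _ "(vs,es)"]) auto
        next
          case False
          then have "v \<in> S'" using v S'_def by auto
          then show ?thesis using F'(3) False by auto
        qed
      qed
      show "\<forall>T\<in>insert (vs, es) F'. \<forall>T'\<in>insert (vs, es) F'. T \<noteq> T' \<longrightarrow> set (fst T) \<inter> set (fst T') = {}"
      proof -
        have "set vs \<inter> set (fst T') = {}" if T': "T' \<in> F'" for T'
        proof (rule ccontr)
          assume "set vs \<inter> set (fst T') \<noteq> {}"
          then obtain a where a: "a \<in> set vs" "a \<in> family_anchors F'"
            using T' unfolding family_anchors_def by auto
          then obtain v where "v \<in> inc a" "v \<in> S'" using F'(6) by auto
          then show False using noextB[OF t mx cl S k1 a(1)] S'_def by auto
        qed
        then show ?thesis using F'(4) by (metis Int_commute fst_conv insert_iff)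
      qed
      show "\<forall>e\<in>E'. family_traversals (insert (vs, es) F') e = card (inc e \<inter> S) div 2"
      proof
        fix e assume e: "e \<in> E'"
        have "family_traversals (insert (vs, es) F') e = traversals vs es e + family_traversals F' e"
          unfolding family_traversals_def using F'(1) notin by simp
        also have "\<dots> = card (inc e \<inter> S) div 2"
          using F'(5) e cardsplit[of e] trv[OF e] by simp
        finally show "family_traversals (insert (vs, es) F') e = card (inc e \<inter> S) div 2" .
      qed
      show "family_anchors (insert (vs, es) F') = {e \<in> E'. inc e \<inter> S \<noteq> {}}"
      proof -
        have "family_anchors (insert (vs, es) F') = set vs \<union> family_anchors F'"
          unfolding family_anchors_def by simp
        also have "\<dots> = {e \<in> E'. inc e \<inter> S \<noteq> {}}" unfolding anc F'(6) S'_def using sS by auto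
        finally show ?thesis .
      qed
    qed
  qed
qed

end



lemma dwalkD:
  assumes "walk E V (dual_inc E inc) vs es" "j < length es"
  shows "es!j \<in> inc (vs!j)" "es!j \<in> inc (vs!Suc j)" "vs!j \<noteq> vs!Suc j" "es!j \<in> V"
        "vs!j \<in> E" "vs!Suc j \<in> E"
  using walk_nthD[OF assms] by (auto simp: dual_inc_def)

lemma trav0:
  assumes "walk V E inc vs es" "x \<notin> set vs"
  shows "traversals vs es x = 0"
proof -
  have l: "length vs = Suc (length es)" using assms unfolding walk_def by auto
  have "{i\<in>{1..length es}. vs ! i = x} = {}" using assms(2) l by (auto intro: nth_mem)
  then show ?thesis unfolding traversals_def by simp
qed

lemma fam2f:
  assumes hg: "hypergraph V E inc" and E'E: "E' \<subseteq> E" and ev: "\<forall>e\<in>E. even (card (inc e))"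
    and ef: "euler_family E V (dual_inc E inc) F" and an: "family_anchors F = E'"
    and tr: "\<forall>e\<in>E'. family_traversals F e = card (inc e) div 2"
  shows "finite F" "\<forall>T\<in>F. \<forall>e\<in>set (fst T). inc e \<subseteq> set (snd T)" "two_factor V E inc E'"
proof -
  have finV: "finite V" and incV: "\<forall>e\<in>E. inc e \<subseteq> V" using hg unfolding hypergraph_def by auto
  have cst: "\<forall>T\<in>F. closed_strict_trail E V (dual_inc E inc) (fst T) (snd T)"
    and uq: "\<forall>v\<in>V. \<exists>!T. T \<in> F \<and> v \<in> set (snd T)"
    and dj: "\<forall>T\<in>F. \<forall>T'\<in>F. T \<noteq> T' \<longrightarrow> set (fst T) \<inter> set (fst T') = {}"
    using ef unfolding euler_family_def by auto
  have W: "walk E V (dual_inc E inc) (fst T) (snd T)" "distinct (snd T)" "2 \<le> length (snd T)"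
    "fst T ! 0 = fst T ! length (snd T)" if "T \<in> F" for T
    using cst that unfolding closed_strict_trail_def closed_walk_def by auto
  have sV: "set (snd T) \<subseteq> V" if "T \<in> F" for T using W(1)[OF that] unfolding walk_def by auto
  have uqI: "T = T'" if "v \<in> V" "T \<in> F" "T' \<in> F" "v \<in> set (snd T)" "v \<in> set (snd T')" for v T T'
  proof -
    have "\<exists>!T. T \<in> F \<and> v \<in> set (snd T)" using uq that(1) by (rule bspec)
    then show ?thesis using that(2-5) by (auto dest: ex1_implies_ex)
  qed
  show finF: "finite F"
  proof -
    have inj: "inj_on (\<lambda>T. snd T ! 0) F"
    proof (rule inj_onI)
      fix T T' assume T: "T \<in> F" "T' \<in> F" "snd T ! 0 = snd T' ! 0"
      have i1: "snd T ! 0 \<in> set (snd T)" using W(3)[OF T(1)] by (auto intro: nth_mem)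
      have i2: "snd T ! 0 \<in> set (snd T')" using W(3)[OF T(2)] T(3) by (auto intro!: nth_mem)
      have "snd T ! 0 \<in> V" using i1 sV[OF T(1)] by auto
      then show "T = T'" using uqI i1 i2 T by blast
    qed
    have "(\<lambda>T. snd T ! 0) ` F \<subseteq> V"
      using W(3) sV by (fastforce intro: nth_mem)
    then have "finite ((\<lambda>T. snd T ! 0) ` F)" using finV by (rule finite_subset)
    then show ?thesis using inj finite_imageD by blast
  qed
  have incEq: "inc e = inc_edges (fst T) (snd T) e" if T: "T \<in> F" and e: "e \<in> set (fst T)" for T e
  proof -
    have eE': "e \<in> E'" using an T e unfolding family_anchors_def by auto
    have eE: "e \<in> E" using eE' E'E by auto
    have "family_traversals F e = traversals (fst T) (snd T) e + sum (\<lambda>T. traversals (fst T) (snd T) e) (F - {T})"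
      unfolding family_traversals_def using finF T by (simp add: sum.remove)
    also have "sum (\<lambda>T. traversals (fst T) (snd T) e) (F - {T}) = 0"
    proof (rule sum.neutral, rule ballI)
      fix T' assume T': "T' \<in> F - {T}"
      have "T' \<noteq> T" "T' \<in> F" using T' by auto
      then have "set (fst T) \<inter> set (fst T') = {}" using dj T by blast
      then have "e \<notin> set (fst T')" using e by blast
      then show "traversals (fst T') (snd T') e = 0" using trav0[OF W(1)] T' by blast
    qed
    finally have "traversals (fst T) (snd T) e = card (inc e) div 2" using tr eE' by simp
    moreover have "card (inc_edges (fst T) (snd T) e) = 2 * traversals (fst T) (snd T) e"
      using walk_count[OF W(1,2)[OF T], of e] W(4)[OF T] by simp
    ultimately have c: "card (inc_edges (fst T) (snd T) e) = card (inc e)" using ev eE by simp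
    have sub: "inc_edges (fst T) (snd T) e \<subseteq> inc e"
      unfolding inc_edges_def using dwalkD(1,2)[OF W(1)[OF T]] by auto
    have "finite (inc e)" using incV eE finV by (auto intro: finite_subset)
    then show ?thesis using card_subset_eq[OF _ sub c] by simp
  qed
  show "\<forall>T\<in>F. \<forall>e\<in>set (fst T). inc e \<subseteq> set (snd T)"
    using incEq unfolding inc_edges_def by (auto intro: nth_mem)
  show "two_factor V E inc E'"
    unfolding two_factor_def degree_def
  proof (intro conjI ballI)
    show "E' \<subseteq> E" by fact
    fix v assume v: "v \<in> V"
    then obtain T where T: "T \<in> F" "v \<in> set (snd T)" using uq by blast
    then obtain j where j: "j < length (snd T)" "v = snd T ! j" by (auto simp: in_set_conv_nth)
    have l: "length (fst T) = Suc (length (snd T))" using W(1)[OF T(1)] unfolding walk_def by auto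
    let ?a = "fst T ! j" and ?b = "fst T ! Suc j"
    have ab: "?a \<in> E'" "?b \<in> E'" using an T(1) j l unfolding family_anchors_def by (auto intro!: nth_mem)
    have ne: "?a \<noteq> ?b" and va: "v \<in> inc ?a" and vb: "v \<in> inc ?b" using dwalkD[OF W(1)[OF T(1)] j(1)] j by auto
    have "{e\<in>E'. v \<in> inc e} = {?a, ?b}"
    proof
      show "{?a, ?b} \<subseteq> {e\<in>E'. v \<in> inc e}" using ab va vb by auto
      show "{e\<in>E'. v \<in> inc e} \<subseteq> {?a, ?b}"
      proof
        fix e assume e: "e \<in> {e\<in>E'. v \<in> inc e}"
        then obtain T' where T': "T' \<in> F" "e \<in> set (fst T')" using an unfolding family_anchors_def by auto
        have "v \<in> inc_edges (fst T') (snd T') e" using incEq[OF T'] e by auto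
        then obtain j' where j': "j' < length (snd T')" "v = snd T' ! j'"
          "fst T' ! j' = e \<or> fst T' ! Suc j' = e" unfolding inc_edges_def by auto
        have "v \<in> set (snd T')" using j' by (auto intro: nth_mem)
        then have "T' = T" using uqI[OF v T(1) T'(1) T(2)] by simp
        then have "j' = j" using j j' W(2)[OF T(1)] nth_eq_iff_index_eq by metis
        then show "e \<in> {?a, ?b}" using j' \<open>T' = T\<close> by auto
      qed
    qed
    then show "card {e\<in>E'. v \<in> inc e} = 2" using ne by simp
  qed
qed

lemma tour_path:
  assumes w: "walk E V (dual_inc E inc) vs es" and d: "distinct es" and i: "i < j" "j < length es"
  shows "walk V (set vs) inc (map (\<lambda>m. es!m) [i..<Suc j]) (map (\<lambda>m. vs!m) [Suc i..<Suc j])"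
proof -
  have l: "length vs = Suc (length es)" and sV: "set es \<subseteq> V" using w unfolding walk_def by auto
  show ?thesis unfolding walk_def
  proof (intro conjI)
    show "length (map (\<lambda>m. es!m) [i..<Suc j]) = Suc (length (map (\<lambda>m. vs!m) [Suc i..<Suc j]))"
      using i by (simp del: upt_Suc)
    show "set (map (\<lambda>m. es!m) [i..<Suc j]) \<subseteq> V" using i sV by (auto intro!: subsetD[OF sV] nth_mem)
    show "set (map (\<lambda>m. vs!m) [Suc i..<Suc j]) \<subseteq> set vs" using i l by (auto intro!: nth_mem)
    show "\<forall>n<length (map (\<lambda>m. vs!m) [Suc i..<Suc j]).
      map (\<lambda>m. es!m) [i..<Suc j] ! n \<noteq> map (\<lambda>m. es!m) [i..<Suc j] ! Suc n \<and>
      map (\<lambda>m. es!m) [i..<Suc j] ! n \<in> inc (map (\<lambda>m. vs!m) [Suc i..<Suc j] ! n) \<and>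
      map (\<lambda>m. es!m) [i..<Suc j] ! Suc n \<in> inc (map (\<lambda>m. vs!m) [Suc i..<Suc j] ! n)"
    proof (intro allI impI)
      fix n assume n: "n < length (map (\<lambda>m. vs!m) [Suc i..<Suc j])"
      then have n': "i + n < j" by (simp del: upt_Suc)
      have e1: "map (\<lambda>m. es!m) [i..<Suc j] ! n = es ! (i+n)" using n' by (simp del: upt_Suc)
      have e2: "map (\<lambda>m. es!m) [i..<Suc j] ! Suc n = es ! Suc (i+n)" using n' by (simp del: upt_Suc)
      have e3: "map (\<lambda>m. vs!m) [Suc i..<Suc j] ! n = vs ! Suc (i+n)" using n' by (simp del: upt_Suc)
      have "es ! (i+n) \<noteq> es ! Suc (i+n)" using d n' i nth_eq_iff_index_eq by fastforce
      moreover have "es ! (i+n) \<in> inc (vs ! Suc (i+n))" using dwalkD(2)[OF w, of "i+n"] n' i by (simp del: upt_Suc)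
      moreover have "es ! Suc (i+n) \<in> inc (vs ! Suc (i+n))" using dwalkD(1)[OF w, of "Suc (i+n)"] n' i by (simp del: upt_Suc)
      ultimately show "map (\<lambda>m. es!m) [i..<Suc j] ! n \<noteq> map (\<lambda>m. es!m) [i..<Suc j] ! Suc n \<and>
      map (\<lambda>m. es!m) [i..<Suc j] ! n \<in> inc (map (\<lambda>m. vs!m) [Suc i..<Suc j] ! n) \<and>
      map (\<lambda>m. es!m) [i..<Suc j] ! Suc n \<in> inc (map (\<lambda>m. vs!m) [Suc i..<Suc j] ! n)"
        using e1 e2 e3 by (simp del: upt_Suc)
    qed
  qed
qed

lemma tour_conn:
  assumes t: "euler_tour E V (dual_inc E inc) vs es"
  shows "connected_hg V (set vs) inc"
  unfolding connected_hg_def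
proof (intro ballI impI)
  fix u w assume u: "u \<in> V" and w: "w \<in> V" and uw: "u \<noteq> w"
  have wk: "walk E V (dual_inc E inc) vs es" and d: "distinct es" and se: "set es = V"
    using t unfolding euler_tour_def closed_strict_trail_def closed_walk_def by auto
  obtain i where i: "i < length es" "es!i = u" using u se by (auto simp: in_set_conv_nth)
  obtain j where j: "j < length es" "es!j = w" using w se by (auto simp: in_set_conv_nth)
  have ij: "i \<noteq> j" using i j uw by auto
  show "\<exists>vs' es'. walk V (set vs) inc vs' es' \<and> hd vs' = u \<and> last vs' = w"
  proof (cases "i < j")
    case True
    show ?thesis
      by (rule exI, rule exI, rule conjI[OF tour_path[OF wk d True j(1)]]) (use i j True in \<open>simp add: hd_map last_map hd_upt last_upt del: upt_Suc\<close>)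
  next
    case False
    then have ji: "j < i" using ij by (simp del: upt_Suc)
    have "walk V (set vs) inc (rev (map (\<lambda>m. es!m) [j..<Suc i])) (rev (map (\<lambda>m. vs!m) [Suc j..<Suc i]))"
      by (rule walk_rev[OF tour_path[OF wk d ji i(1)]])
    moreover have "hd (rev (map (\<lambda>m. es!m) [j..<Suc i])) = u" using i ji by (simp add: hd_rev last_map last_upt del: upt_Suc)
    moreover have "last (rev (map (\<lambda>m. es!m) [j..<Suc i])) = w" using j ji by (simp add: last_rev hd_map hd_upt del: upt_Suc)
    ultimately show ?thesis by blast
  qed
qed




lemma conn_same:
  assumes ef: "euler_family E V (dual_inc E inc) F" and an: "family_anchors F = E'"
    and incsub: "\<forall>T\<in>F. \<forall>e\<in>set (fst T). inc e \<subseteq> set (snd T)"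
    and wk: "walk V E' inc xs fs" and x: "x \<in> V"
  shows "\<forall>m\<le>length fs. \<exists>T\<in>F. xs!0 \<in> set (snd T) \<and> xs!m \<in> set (snd T)"
proof -
  have uq: "\<forall>v\<in>V. \<exists>!T. T \<in> F \<and> v \<in> set (snd T)" using ef unfolding euler_family_def by auto
  have uqI: "T = T'" if "v \<in> V" "T \<in> F" "T' \<in> F" "v \<in> set (snd T)" "v \<in> set (snd T')" for v T T'
  proof -
    have "\<exists>!T. T \<in> F \<and> v \<in> set (snd T)" using uq that(1) by (rule bspec)
    then show ?thesis using that(2-5) by (auto dest: ex1_implies_ex)
  qed
  have l: "length xs = Suc (length fs)" and sx: "set xs \<subseteq> V" and sf: "set fs \<subseteq> E'"
    using wk unfolding walk_def by auto
  have xV: "xs!m \<in> V" if "m \<le> length fs" for m using that l sx by (auto intro!: subsetD[OF sx] nth_mem)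
  show ?thesis
  proof (intro allI impI)
    fix m assume "m \<le> length fs"
    then show "\<exists>T\<in>F. xs!0 \<in> set (snd T) \<and> xs!m \<in> set (snd T)"
    proof (induction m)
      case 0
      then obtain T where "T \<in> F" "xs!0 \<in> set (snd T)" using uq xV[of 0] by blast
      then show ?case by blast
    next
      case (Suc m)
      then obtain T where T: "T \<in> F" "xs!0 \<in> set (snd T)" "xs!m \<in> set (snd T)" by auto
      have m: "m < length fs" using Suc by simp
      have f: "fs!m \<in> E'" using sf m by (auto intro: nth_mem)
      then obtain T' where T': "T' \<in> F" "fs!m \<in> set (fst T')" using an unfolding family_anchors_def by auto
      have a1: "xs!m \<in> inc (fs!m)" "xs!Suc m \<in> inc (fs!m)" using walk_nthD[OF wk m] by auto
      then have "xs!m \<in> set (snd T')" "xs!Suc m \<in> set (snd T')" using incsub T' by auto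
      then have "T' = T" using uqI[OF xV[of m] T'(1) T(1)] T(3) m by simp
      then show ?case using T \<open>xs!Suc m \<in> set (snd T')\<close> by blast
    qed
  qed
qed

theorem theorem2p44:
  fixes V :: "'v set" and E :: "'e set" and inc :: "'e \<Rightarrow> 'v set" and E' :: "'e set"
  assumes "hypergraph V E inc"
    and "E \<noteq> {}"
    and "\<forall>e\<in>E. inc e \<noteq> {}"
    and "\<forall>e\<in>E. even (card (inc e))"
    and "E' \<subseteq> E"
  shows "(two_factor V E inc E' \<longleftrightarrow>
            (\<exists>F. euler_family E V (dual_inc E inc) F \<and> family_anchors F = E' \<and>
                 (\<forall>e\<in>E'. family_traversals F e = card (inc e) div 2)))
       \<and> (connected_two_factor V E inc E' \<longleftrightarrow>
            (\<exists>vs es. euler_tour E V (dual_inc E inc) vs es \<and> set vs = E' \<and>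
                 (\<forall>e\<in>E'. traversals vs es e = card (inc e) div 2)))"
proof -
  note hg = assms(1) and ne = assms(3) and ev = assms(4) and E'E = assms(5)
  have finV: "finite V" and Vne: "V \<noteq> {}" and finE: "finite E" and incV: "\<forall>e\<in>E. inc e \<subseteq> V"
    using hg unfolding hypergraph_def by auto
  have P1: "two_factor V E inc E' \<longleftrightarrow>
            (\<exists>F. euler_family E V (dual_inc E inc) F \<and> family_anchors F = E' \<and>
                 (\<forall>e\<in>E'. family_traversals F e = card (inc e) div 2))"
  proof
    assume tf2: "two_factor V E inc E'"
    interpret tf V E inc E'
      using tf2 finV finE incV E'E unfolding two_factor_def degree_def by unfold_locales auto
    have incI: "inc e \<inter> V = inc e" if "e \<in> E'" for e using that incV E'E by auto
    have "\<forall>e\<in>E'. even (card (inc e \<inter> V))" using ev E'E incI by auto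
    then obtain F where F: "finite F"
     "\<forall>T\<in>F. closed_strict_trail E V (dual_inc E inc) (fst T) (snd T) \<and> set (fst T) \<subseteq> E' \<and> set (snd T) \<subseteq> V"
     "\<forall>v\<in>V. \<exists>!T. T\<in>F \<and> v \<in> set (snd T)"
     "\<forall>T\<in>F. \<forall>T'\<in>F. T \<noteq> T' \<longrightarrow> set (fst T) \<inter> set (fst T') = {}"
     "\<forall>e\<in>E'. family_traversals F e = card (inc e \<inter> V) div 2"
     "family_anchors F = {e\<in>E'. inc e \<inter> V \<noteq> {}}"
      using famS[of V] by blast
    have "family_anchors F = E'" using F(6) incI ne E'E by auto
    moreover have "euler_family E V (dual_inc E inc) F"
      unfolding euler_family_def using F(2,3,4) by blast
    moreover have "\<forall>e\<in>E'. family_traversals F e = card (inc e) div 2" using F(5) incI by simp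
    ultimately show "\<exists>F. euler_family E V (dual_inc E inc) F \<and> family_anchors F = E' \<and>
                 (\<forall>e\<in>E'. family_traversals F e = card (inc e) div 2)" by blast
  next
    assume "\<exists>F. euler_family E V (dual_inc E inc) F \<and> family_anchors F = E' \<and>
                 (\<forall>e\<in>E'. family_traversals F e = card (inc e) div 2)"
    then show "two_factor V E inc E'" using fam2f(3)[OF hg E'E ev] by blast
  qed
  have P2: "connected_two_factor V E inc E' \<longleftrightarrow>
            (\<exists>vs es. euler_tour E V (dual_inc E inc) vs es \<and> set vs = E' \<and>
                 (\<forall>e\<in>E'. traversals vs es e = card (inc e) div 2))"
  proof
    assume ctf: "connected_two_factor V E inc E'"
    then have tf2: "two_factor V E inc E'" and cn: "connected_hg V E' inc"
      unfolding connected_two_factor_def by auto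
    obtain F where ef: "euler_family E V (dual_inc E inc) F" and an: "family_anchors F = E'"
      and tr: "\<forall>e\<in>E'. family_traversals F e = card (inc e) div 2" using P1 tf2 by blast
    have finF: "finite F" and incsub: "\<forall>T\<in>F. \<forall>e\<in>set (fst T). inc e \<subseteq> set (snd T)"
      using fam2f(1,2)[OF hg E'E ev ef an tr] by auto
    have uq: "\<forall>v\<in>V. \<exists>!T. T \<in> F \<and> v \<in> set (snd T)"
      and cst: "\<forall>T\<in>F. closed_strict_trail E V (dual_inc E inc) (fst T) (snd T)"
      using ef unfolding euler_family_def by auto
    have uqI: "T = T'" if "v \<in> V" "T \<in> F" "T' \<in> F" "v \<in> set (snd T)" "v \<in> set (snd T')" for v T T'
    proof -
      have "\<exists>!T. T \<in> F \<and> v \<in> set (snd T)" using uq that(1) by (rule bspec)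
      then show ?thesis using that(2-5) by (auto dest: ex1_implies_ex)
    qed
    have pick: "\<exists>x\<in>V. x \<in> set (snd T)" if T: "T \<in> F" for T
    proof -
      have w: "walk E V (dual_inc E inc) (fst T) (snd T)"
        using cst T unfolding closed_strict_trail_def closed_walk_def by auto
      then have "fst T ! 0 \<in> set (fst T)" unfolding walk_def by (auto intro: nth_mem)
      moreover have "set (fst T) \<subseteq> E'" using an T unfolding family_anchors_def by auto
      ultimately have e: "fst T ! 0 \<in> E'" by auto
      then obtain x where "x \<in> inc (fst T ! 0)" using ne E'E by blast
      then show ?thesis using incsub T e incV E'E \<open>fst T ! 0 \<in> set (fst T)\<close> by blast
    qed
    have same: "T1 = T2" if T12: "T1 \<in> F" "T2 \<in> F" for T1 T2
    proof -
      obtain x where x: "x \<in> V" "x \<in> set (snd T1)" using pick[OF T12(1)] by blast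
      obtain y where y: "y \<in> V" "y \<in> set (snd T2)" using pick[OF T12(2)] by blast
      show ?thesis
      proof (cases "x = y")
        case True then show ?thesis using uqI[OF x(1) T12(1) T12(2) x(2)] y by blast
      next
        case False
        then obtain xs fs where wk: "walk V E' inc xs fs" "hd xs = x" "last xs = y"
          using cn x y unfolding connected_hg_def by blast
        have l: "length xs = Suc (length fs)" using wk unfolding walk_def by auto
        obtain T where T: "T \<in> F" "xs!0 \<in> set (snd T)" "xs!length fs \<in> set (snd T)"
          using conn_same[OF ef an incsub wk(1) x(1)] by blast
        have "xs!0 = x" using wk(2) l by (cases xs) auto
        moreover have "xs!length fs = y" using wk(3) l by (metis last_conv_nth diff_Suc_1 list.size(3) nat.distinct(1))
        ultimately show ?thesis using uqI[OF x(1) T(1) T12(1)] uqI[OF y(1) T(1) T12(2)] T x y by simp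
      qed
    qed
    obtain v where v: "v \<in> V" using Vne by blast
    then obtain T where T: "T \<in> F" using uq by blast
    then have FT: "F = {T}" using same by blast
    have "euler_tour E V (dual_inc E inc) (fst T) (snd T)"
      unfolding euler_tour_def
    proof
      show "closed_strict_trail E V (dual_inc E inc) (fst T) (snd T)" using cst T by blast
      have "set (snd T) \<subseteq> V" using cst T unfolding closed_strict_trail_def closed_walk_def walk_def by auto
      moreover have "V \<subseteq> set (snd T)" using uq FT by blast
      ultimately show "set (snd T) = V" by blast
    qed
    moreover have "set (fst T) = E'" using an FT unfolding family_anchors_def by simp
    moreover have "\<forall>e\<in>E'. traversals (fst T) (snd T) e = card (inc e) div 2"
      using tr FT unfolding family_traversals_def by simp
    ultimately show "\<exists>vs es. euler_tour E V (dual_inc E inc) vs es \<and> set vs = E' \<and>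
                 (\<forall>e\<in>E'. traversals vs es e = card (inc e) div 2)" by blast
  next
    assume "\<exists>vs es. euler_tour E V (dual_inc E inc) vs es \<and> set vs = E' \<and>
                 (\<forall>e\<in>E'. traversals vs es e = card (inc e) div 2)"
    then obtain vs es where t: "euler_tour E V (dual_inc E inc) vs es" and s: "set vs = E'"
      and tr: "\<forall>e\<in>E'. traversals vs es e = card (inc e) div 2" by blast
    have cst: "closed_strict_trail E V (dual_inc E inc) vs es" and se: "set es = V"
      using t unfolding euler_tour_def by auto
    have "euler_family E V (dual_inc E inc) {(vs,es)}"
      unfolding euler_family_def using cst se by auto
    moreover have "family_anchors {(vs,es)} = E'" using s unfolding family_anchors_def by simp
    moreover have "\<forall>e\<in>E'. family_traversals {(vs,es)} e = card (inc e) div 2"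
      using tr unfolding family_traversals_def by simp
    ultimately have "two_factor V E inc E'" using P1 by blast
    moreover have "connected_hg V E' inc" using tour_conn[OF t] s by simp
    ultimately show "connected_two_factor V E inc E'" unfolding connected_two_factor_def by blast
  qed
  show ?thesis using P1 P2 by blast
qed


end
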